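(* Let $N\ge3$, $1<k<N-1$, $p>0$, $c>0$, and let $v:\mathbb R^{N-1}\to[0,\infty]$ be measurable with $0<v<\infty$ a.e. in $\mathbb R^{N-1}$ and $$v(x')\ge c\int_{\mathbb R^{N-1}}\frac{v(y')^p}{|x'-y'|^{k-1}}dy'\quad\text{for a.e. }x'\in\mathbb R^{N-1}.$$ Then there exists $C>0$ such that $v(x')\ge C|x'|^{1-k}$ for a.e. $x'\in\mathbb R^{N-1}$ with $|x'|>1$. *)

theory Defs
  imports "HOL-Analysis.Analysis"
begin

definition ennreal_powr :: "ennreal \<Rightarrow> real \<Rightarrow> ennreal" where
  "ennreal_powr x p = (if x = \<infinity> then \<infinity> else ennreal (enn2real x powr p))"

end

theory Submission
  imports Defs
begin

lemma ball_not_null: "ball (0::'a::euclidean_space) 1 \<notin> null_sets lebesgue"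
proof
  assume "ball (0::'a) 1 \<in> null_sets lebesgue"
  then have "measure lebesgue (ball (0::'a) 1) = 0" by (simp add: measure_def null_setsD1)
  moreover have "measure lborel (ball (0::'a) 1) > 0" using content_ball_pos[of 1 "0::'a"] by simp
  ultimately show False
    by (simp add: measure_completion)
qed

lemma powr_meas: "v \<in> borel_measurable lebesgue \<Longrightarrow> (\<lambda>y. ennreal_powr (v y) p) \<in> borel_measurable lebesgue"
proof -
  assume m: "v \<in> borel_measurable lebesgue"
  have "{y \<in> space lebesgue. v y = \<infinity>} \<in> sets lebesgue"
    using m by measurable
  then show ?thesis
    unfolding ennreal_powr_def
    using m by measurable
qed

lemma inv_mono: "(d::real) \<le> D \<Longrightarrow> 0 \<le> d \<Longrightarrow> 0 < D \<Longrightarrow> inverse (ennreal D) \<le> inverse (ennreal d)"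
proof (cases "d = 0")
  case False
  assume "d \<le> D" "0 \<le> d" "0 < D"
  then show ?thesis using False
    by (simp add: inverse_ennreal le_imp_inverse_le)
qed simp

theorem lemma3p1:
  fixes v :: "real ^ 'n \<Rightarrow> ennreal" and k p c :: real
  assumes dim: "CARD('n) \<ge> 2"
    and k: "1 < k" "k < real CARD('n)"
    and p: "p > 0" and c: "c > 0"
    and meas: "v \<in> borel_measurable lebesgue"
    and fin: "AE x in lebesgue. 0 < v x \<and> v x < \<infinity>"
    and ineq: "AE x in lebesgue.
        v x \<ge> ennreal c * (\<integral>\<^sup>+ y. ennreal_powr (v y) p / ennreal (norm (x - y) powr (k - 1)) \<partial>lebesgue)"
  shows "\<exists>C>0. AE x in lebesgue. norm x > 1 \<longrightarrow> v x \<ge> ennreal (C * norm x powr (1 - k))"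
proof -
  define f where "f y = ennreal_powr (v y) p * indicator (ball 0 1) y" for y
  have fm: "f \<in> borel_measurable lebesgue"
    unfolding f_def using powr_meas[OF meas]
    by (intro borel_measurable_times_ennreal borel_measurable_indicator) auto
  have "integral\<^sup>N lebesgue f \<noteq> 0"
  proof
    assume "integral\<^sup>N lebesgue f = 0"
    then have "AE y in lebesgue. f y = 0" using nn_integral_0_iff_AE[OF fm] by simp
    then have "AE y in lebesgue. (y::real^'n) \<notin> ball 0 1"
      using fin
    proof eventually_elim
      case (elim y)
      show ?case
      proof
        assume y: "y \<in> ball 0 1"
        have "enn2real (v y) > 0" using elim(2) by (simp add: enn2real_positive_iff)
        then have "ennreal_powr (v y) p > 0" using elim(2)
          by (simp add: ennreal_powr_def)
        then show False using elim(1) y by (simp add: f_def)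
      qed
    qed
    then have "ball (0::real^'n) 1 \<in> null_sets lebesgue"
      by (subst AE_iff_null_sets) auto
    then show False using ball_not_null by blast
  qed
  then have Ipos: "integral\<^sup>N lebesgue f > 0" by (simp add: zero_less_iff_neq_zero)
  obtain a where a: "a > 0" "ennreal a \<le> integral\<^sup>N lebesgue f"
  proof -
    obtain r :: ennreal where r: "0 < r" "r < integral\<^sup>N lebesgue f" using dense[OF Ipos] by blast
    then have "r < top" using top.not_eq_extremum by fastforce
    then obtain a where "r = ennreal a" "a \<ge> 0" by (cases r) auto
    then show ?thesis using that r by (metis ennreal_less_zero_iff less_le order.strict_iff_not)
  qed
  define C where "C = c * a / 2 powr (k - 1)"
  have Cpos: "C > 0" using a c by (simp add: C_def)
  show ?thesis
  proof (intro exI conjI)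
    show "C > 0" by (rule Cpos)
    show "AE x in lebesgue. norm x > 1 \<longrightarrow> v x \<ge> ennreal (C * norm x powr (1 - k))"
      using ineq
    proof eventually_elim
      case (elim x)
      show ?case
      proof
        assume x: "norm x > 1"
        define D where "D = (2 * norm x) powr (k - 1)"
        have Dpos: "D > 0" using x by (auto simp add: D_def)
        have pt: "f y * ennreal (1 / D) \<le> ennreal_powr (v y) p / ennreal (norm (x - y) powr (k - 1))" for y
        proof (cases "y \<in> ball 0 1")
          case True
          have "norm (x - y) \<le> norm x + norm y" by (rule norm_triangle_ineq4)
          also have "\<dots> \<le> 2 * norm x" using True x by simp
          finally have "norm (x - y) powr (k - 1) \<le> D"
            unfolding D_def using k by (intro powr_mono2) auto
          then have "inverse (ennreal D) \<le> inverse (ennreal (norm (x - y) powr (k - 1)))"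
            using inv_mono[OF _ _ Dpos] by auto
          then show ?thesis using True Dpos
            by (simp add: f_def divide_ennreal_def inverse_ennreal inverse_eq_divide mult_left_mono)
        qed (simp add: f_def)
        have "ennreal (C * norm x powr (1 - k)) = ennreal c * (ennreal a * ennreal (1 / D))"
          using x c a Dpos by (simp add: ennreal_mult[symmetric] C_def D_def powr_diff powr_mult)
        also have "\<dots> \<le> ennreal c * (integral\<^sup>N lebesgue f * ennreal (1 / D))"
          using a by (intro mult_left_mono mult_right_mono) auto
        also have "\<dots> = ennreal c * (\<integral>\<^sup>+ y. f y * ennreal (1 / D) \<partial>lebesgue)"
          using nn_integral_multc[OF fm] by simp
        also have "\<dots> \<le> ennreal c * (\<integral>\<^sup>+ y. ennreal_powr (v y) p / ennreal (norm (x - y) powr (k - 1)) \<partial>lebesgue)"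
          by (intro mult_left_mono nn_integral_mono pt) auto
        also have "\<dots> \<le> v x" by (rule elim)
        finally show "v x \<ge> ennreal (C * norm x powr (1 - k))" .
      qed
    qed
  qed
qed

end
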